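(* Let $\gamma>0$, let $\mathcal F=\{f_\vartheta:\mathcal X\to[-1,1]:\vartheta\in\Theta\}$ be a class of functions with parameter space $\Theta$, $\mathcal D$ a probability distribution over $\mathcal X$ and $\mu$ a probability measure over $\Theta$. For $\phi,\vartheta\in\Theta$ let $l^\phi(\vartheta)=\frac12\mathbb E_{x\sim\mathcal D}[(f_\phi(x)-f_\vartheta(x))^2]$. Then for every $\vartheta\in\Theta$, $$\mathrm{Var}_{\phi\sim\mu}[l^\phi(\vartheta)]\le4\sqrt{\mathrm{Var}_{\phi\sim\mu}[f_\phi]}\le4\sqrt{\mathbb E_{\phi\sim\mu,\,x\sim\mathcal D}[f_\phi(x)^2]},$$ where $\mathrm{Var}_{\phi\sim\mu}[f_\phi]=\mathbb E_{\phi\sim\mu}[\langle f_\phi,f_\phi\rangle_{\mathcal D}]-\langle\mathbb E_{\phi\sim\mu}[f_\phi],\mathbb E_{\phi\sim\mu}[f_\phi]\rangle_{\mathcal D}$.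
   Context: $\langle f,g\rangle_{\mathcal D}=\mathbb E_{x\sim\mathcal D}[f(x)g(x)]$ is the $L^2(\mathcal D)$ inner product; $\mathbb E_{\phi\sim\mu}[f_\phi]$ denotes the pointwise mean function $x\mapsto\mathbb E_{\phi\sim\mu}[f_\phi(x)]$. *)

theory Defs
  imports "HOL-Probability.Probability"
begin

definition sq_loss :: "'x measure \<Rightarrow> ('p \<Rightarrow> 'x \<Rightarrow> real) \<Rightarrow> 'p \<Rightarrow> 'p \<Rightarrow> real" where
  "sq_loss D f phi theta = (1/2) * (\<integral>x. (f phi x - f theta x)^2 \<partial>D)"

definition var_of :: "'p measure \<Rightarrow> ('p \<Rightarrow> real) \<Rightarrow> real" where
  "var_of mu g = (\<integral>phi. (g phi - (\<integral>psi. g psi \<partial>mu))^2 \<partial>mu)"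

definition inner_L2 :: "'x measure \<Rightarrow> ('x \<Rightarrow> real) \<Rightarrow> ('x \<Rightarrow> real) \<Rightarrow> real" where
  "inner_L2 D g h = (\<integral>x. g x * h x \<partial>D)"

definition mean_fun :: "'p measure \<Rightarrow> ('p \<Rightarrow> 'x \<Rightarrow> real) \<Rightarrow> 'x \<Rightarrow> real" where
  "mean_fun mu f = (\<lambda>x. \<integral>phi. f phi x \<partial>mu)"

definition var_class :: "'p measure \<Rightarrow> 'x measure \<Rightarrow> ('p \<Rightarrow> 'x \<Rightarrow> real) \<Rightarrow> real" where
  "var_class mu D f = (\<integral>phi. inner_L2 D (f phi) (f phi) \<partial>mu)
                       - inner_L2 D (mean_fun mu f) (mean_fun mu f)"

end

theory Submission
  imports Defs
begin

lemma pb_int: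
  fixes X :: "'a \<Rightarrow> real"
  assumes "prob_space M" "X \<in> borel_measurable M" "\<And>x. x \<in> space M \<Longrightarrow> \<bar>X x\<bar> \<le> B"
  shows "integrable M X"
proof -
  interpret prob_space M by fact
  show ?thesis using assms by (intro integrable_const_bound[where B=B]) (auto intro!: AE_I2)
qed

lemma pb_bound:
  fixes X :: "'a \<Rightarrow> real"
  assumes "prob_space M" "X \<in> borel_measurable M" "\<And>x. x \<in> space M \<Longrightarrow> \<bar>X x\<bar> \<le> B"
  shows "\<bar>integral\<^sup>L M X\<bar> \<le> B"
proof -
  interpret prob_space M by fact
  have i: "integrable M X" using pb_int[OF assms(1,2)] assms(3) by blast
  have "\<bar>integral\<^sup>L M X\<bar> \<le> (\<integral>x. \<bar>X x\<bar> \<partial>M)"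
    using integral_norm_bound[of M X] by simp
  also have "\<dots> \<le> (\<integral>x. B \<partial>M)"
    using i by (intro integral_mono) (auto simp: assms(3))
  finally have "\<bar>integral\<^sup>L M X\<bar> \<le> (\<integral>x. B \<partial>M)" .
  then show ?thesis by (simp add: prob_space)
qed

lemma jensen_sq:
  fixes X :: "'a \<Rightarrow> real"
  assumes "prob_space M" "X \<in> borel_measurable M" "\<And>x. x \<in> space M \<Longrightarrow> \<bar>X x\<bar> \<le> B"
  shows "(integral\<^sup>L M X)^2 \<le> (\<integral>x. (X x)^2 \<partial>M)"
proof -
  interpret prob_space M by fact
  have i1: "integrable M X" using pb_int[OF assms(1,2)] assms(3) by blast
  have i2: "integrable M (\<lambda>x. (X x)^2)"
  proof (intro pb_int[OF assms(1), where B="B^2"])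
    fix x assume x: "x \<in> space M"
    have "\<bar>X x\<bar>^2 \<le> B^2" using assms(3)[OF x] by (intro power_mono) auto
    then show "\<bar>(X x)^2\<bar> \<le> B^2" by simp
  qed (use assms in auto)
  show ?thesis using variance_eq[OF i1 i2] variance_positive[of X] by simp
qed

lemma var_le:
  fixes X :: "'a \<Rightarrow> real"
  assumes "prob_space M" "X \<in> borel_measurable M" "\<And>x. x \<in> space M \<Longrightarrow> \<bar>X x\<bar> \<le> B"
  shows "(\<integral>x. (X x - integral\<^sup>L M X)^2 \<partial>M) \<le> (\<integral>x. (X x - c)^2 \<partial>M)"
proof -
  interpret prob_space M by fact
  have i1[simp]: "integrable M X" using pb_int[OF assms(1,2)] assms(3) by blast
  have i2[simp]: "integrable M (\<lambda>x. (X x)^2)"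
  proof (intro pb_int[OF assms(1), where B="B^2"])
    fix x assume x: "x \<in> space M"
    have "\<bar>X x\<bar>^2 \<le> B^2" using assms(3)[OF x] by (intro power_mono) auto
    then show "\<bar>(X x)^2\<bar> \<le> B^2" by simp
  qed (use assms in auto)
  have e1: "(\<integral>x. (X x - c)^2 \<partial>M) = (\<integral>x. (X x)^2 \<partial>M) - 2 * c * integral\<^sup>L M X + c^2"
    by (simp add: field_simps prob_space power2_diff power2_eq_square[symmetric])
  have e2: "(\<integral>x. (X x - integral\<^sup>L M X)^2 \<partial>M) = (\<integral>x. (X x)^2 \<partial>M) - (integral\<^sup>L M X)^2"
    using variance_eq[OF i1 i2] by simp
  have "0 \<le> (integral\<^sup>L M X - c)^2" by simp
  then show ?thesis unfolding e1 e2 by (simp add: power2_diff algebra_simps)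
qed

lemma sq_bound:
  fixes a b :: real
  assumes "\<bar>a\<bar> \<le> 1" "\<bar>b\<bar> \<le> 1"
  shows "\<bar>(a - b)^2\<bar> \<le> 4"
proof -
  have "\<bar>a - b\<bar> \<le> 2" using assms by linarith
  then have "\<bar>a - b\<bar>^2 \<le> 2^2" by (intro power_mono) auto
  then show ?thesis by simp
qed

lemma sq_bound2:
  fixes a b :: real
  assumes "\<bar>a\<bar> \<le> 2" "\<bar>b\<bar> \<le> 2"
  shows "\<bar>(a - b)^2\<bar> \<le> 16"
proof -
  have "\<bar>a - b\<bar> \<le> 4" using assms by linarith
  then have "\<bar>a - b\<bar>^2 \<le> 4^2" by (intro power_mono) auto
  then show ?thesis by simp
qed

lemma prod_bound:
  fixes a b :: real
  assumes "\<bar>a\<bar> \<le> 1" "\<bar>b\<bar> \<le> 1"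
  shows "\<bar>a * b\<bar> \<le> 1"
  using assms by (simp add: abs_mult mult_le_one)

lemma sq_le1:
  fixes a :: real
  assumes "\<bar>a\<bar> \<le> 1"
  shows "a * a \<le> 1"
  using prod_bound[OF assms assms] by simp

lemma sq_bound':
  fixes a b :: real
  assumes "\<bar>a\<bar> \<le> 1" "\<bar>b\<bar> \<le> 1"
  shows "(a - b)^2 \<le> 4"
  using sq_bound[OF assms] by simp

theorem mainTheorem14:
  fixes mu :: "'p measure" and D :: "'x measure" and f :: "'p \<Rightarrow> 'x \<Rightarrow> real"
    and gamma :: real and theta :: 'p
  assumes "gamma > 0"
    and "prob_space mu" and "prob_space D"
    and "(\<lambda>(phi, x). f phi x) \<in> borel_measurable (mu \<Otimes>\<^sub>M D)"
    and "\<And>phi x. phi \<in> space mu \<Longrightarrow> x \<in> space D \<Longrightarrow> f phi x \<in> {-1..1}"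
    and "theta \<in> space mu"
  shows "var_of mu (\<lambda>phi. sq_loss D f phi theta) \<le> 4 * sqrt (var_class mu D f)
       \<and> 4 * sqrt (var_class mu D f) \<le> 4 * sqrt (\<integral>z. (case z of (phi, x) \<Rightarrow> (f phi x)^2) \<partial>(mu \<Otimes>\<^sub>M D))"
proof -
  interpret pair_prob_space mu D
    using assms(2,3) by (simp add: pair_prob_space_def pair_sigma_finite_def prob_space_imp_sigma_finite)
  have pmu: "prob_space mu" and pD: "prob_space D" by fact+
  have pP: "prob_space (mu \<Otimes>\<^sub>M D)" by (rule P.prob_space_axioms)
  have F[measurable]: "(\<lambda>(phi, x). f phi x) \<in> borel_measurable (mu \<Otimes>\<^sub>M D)" by (rule assms(4))
  have fb: "\<bar>f phi x\<bar> \<le> 1" if "phi \<in> space mu" "x \<in> space D" for phi x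
    using assms(5)[OF that] by (auto simp: abs_le_iff)
  have fphi: "f phi \<in> borel_measurable D" if "phi \<in> space mu" for phi
  proof -
    have "(\<lambda>x. (\<lambda>(phi, x). f phi x) (phi, x)) \<in> borel_measurable D"
      by (rule measurable_compose[OF measurable_Pair1'[OF that] F])
    then show ?thesis by simp
  qed
  have fx: "(\<lambda>phi. f phi x) \<in> borel_measurable mu" if "x \<in> space D" for x
  proof -
    have "(\<lambda>phi. (\<lambda>(phi, x). f phi x) (phi, x)) \<in> borel_measurable mu"
      by (rule measurable_compose[OF measurable_Pair2'[OF that] F])
    then show ?thesis by simp
  qed
  have fth[measurable]: "f theta \<in> borel_measurable D" by (rule fphi[OF assms(6)])
  define m where "m = mean_fun mu f"
  have m_eq: "m x = (\<integral>phi. f phi x \<partial>mu)" for x unfolding m_def mean_fun_def by simp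
  have mm[measurable]: "m \<in> borel_measurable D"
    unfolding m_def mean_fun_def by measurable
  have mb: "\<bar>m x\<bar> \<le> 1" if "x \<in> space D" for x
    unfolding m_eq by (rule pb_bound[OF pmu fx[OF that]]) (use fb that in auto)

  define g where "g phi = sq_loss D f phi theta" for phi
  define c where "c = (1/2) * (\<integral>x. (m x - f theta x)^2 \<partial>D)"
  define ip where "ip phi = (\<integral>x. (f phi x - m x)^2 \<partial>D)" for phi
  define W where "W = (\<integral>phi. ip phi \<partial>mu)"
  define A where "A = (\<integral>phi. inner_L2 D (f phi) (f phi) \<partial>mu)"
  define B0 where "B0 = inner_L2 D m m"
  have gm[measurable]: "g \<in> borel_measurable mu"
    unfolding g_def[abs_def] sq_loss_def by measurable
  have ipm[measurable]: "ip \<in> borel_measurable mu"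
    unfolding ip_def[abs_def] by measurable
  have gb: "\<bar>g phi\<bar> \<le> 2" if "phi \<in> space mu" for phi
  proof -
    have "\<bar>\<integral>x. (f phi x - f theta x)^2 \<partial>D\<bar> \<le> 4"
      by (rule pb_bound[OF pD]) (use fphi[OF that] fb[OF that] fb[OF assms(6)] sq_bound in auto)
    then show ?thesis unfolding g_def sq_loss_def by simp
  qed
  have cb: "\<bar>c\<bar> \<le> 2"
  proof -
    have "\<bar>\<integral>x. (m x - f theta x)^2 \<partial>D\<bar> \<le> 4"
      by (rule pb_bound[OF pD]) (use mb fb[OF assms(6)] sq_bound in auto)
    then show ?thesis unfolding c_def by simp
  qed
  have ipb: "\<bar>ip phi\<bar> \<le> 4" if "phi \<in> space mu" for phi
    unfolding ip_def
    by (rule pb_bound[OF pD]) (use fphi[OF that] fb[OF that] mb sq_bound in auto)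
  have stepA: "var_of mu g \<le> (\<integral>phi. (g phi - c)^2 \<partial>mu)"
    unfolding var_of_def by (rule var_le[OF pmu gm gb])
  have stepB: "(g phi - c)^2 \<le> 4 * ip phi" if phi: "phi \<in> space mu" for phi
  proof -
    note [measurable] = fphi[OF phi]
    have fbp: "\<bar>f phi x\<bar> \<le> 1" "\<bar>f theta x\<bar> \<le> 1" "\<bar>m x\<bar> \<le> 1" if "x \<in> space D" for x
      using fb[OF phi that] fb[OF assms(6) that] mb[OF that] by auto
    have hb: "\<bar>f phi x - m x\<bar> \<le> 2" if "x \<in> space D" for x using fbp[OF that] by linarith
    have i1: "integrable D (\<lambda>x. (f phi x - f theta x)^2)"
      by (rule pb_int[OF pD, where B=4]) (auto intro!: sq_bound' fbp)
    have i2: "integrable D (\<lambda>x. (m x - f theta x)^2)"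
      by (rule pb_int[OF pD, where B=4]) (auto intro!: sq_bound' fbp)
    have ih: "integrable D (\<lambda>x. \<bar>f phi x - m x\<bar>)"
      by (rule pb_int[OF pD, where B=2]) (auto intro!: hb)
    have ihk: "integrable D (\<lambda>x. \<bar>(f phi x - m x) * (f phi x + m x - 2 * f theta x)\<bar>)"
    proof (rule pb_int[OF pD, where B=8])
      fix x assume x: "x \<in> space D"
      have "\<bar>f phi x + m x - 2 * f theta x\<bar> \<le> 4" using fbp[OF x] by linarith
      then have "\<bar>f phi x - m x\<bar> * \<bar>f phi x + m x - 2 * f theta x\<bar> \<le> 2 * 4"
        using hb[OF x] by (intro mult_mono) auto
      then show "\<bar>\<bar>(f phi x - m x) * (f phi x + m x - 2 * f theta x)\<bar>\<bar> \<le> 8" by (simp add: abs_mult)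
    qed measurable
    have "g phi - c = (1/2) * ((\<integral>x. (f phi x - f theta x)^2 \<partial>D) - (\<integral>x. (m x - f theta x)^2 \<partial>D))"
      unfolding g_def c_def sq_loss_def by (simp add: algebra_simps)
    also have "(\<integral>x. (f phi x - f theta x)^2 \<partial>D) - (\<integral>x. (m x - f theta x)^2 \<partial>D)
        = (\<integral>x. (f phi x - f theta x)^2 - (m x - f theta x)^2 \<partial>D)"
      using i1 i2 by simp
    also have "\<dots> = (\<integral>x. (f phi x - m x) * (f phi x + m x - 2 * f theta x) \<partial>D)"
      by (rule Bochner_Integration.integral_cong) (auto simp: power2_eq_square algebra_simps)
    finally have gc: "g phi - c = (1/2) * (\<integral>x. (f phi x - m x) * (f phi x + m x - 2 * f theta x) \<partial>D)" .
    have "\<bar>\<integral>x. (f phi x - m x) * (f phi x + m x - 2 * f theta x) \<partial>D\<bar>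
        \<le> (\<integral>x. \<bar>(f phi x - m x) * (f phi x + m x - 2 * f theta x)\<bar> \<partial>D)"
      using integral_norm_bound[of D "\<lambda>x. (f phi x - m x) * (f phi x + m x - 2 * f theta x)"] by simp
    also have "\<dots> \<le> (\<integral>x. 4 * \<bar>f phi x - m x\<bar> \<partial>D)"
    proof (rule integral_mono[OF ihk])
      show "integrable D (\<lambda>x. 4 * \<bar>f phi x - m x\<bar>)" using ih by simp
      fix x assume x: "x \<in> space D"
      have "\<bar>f phi x + m x - 2 * f theta x\<bar> \<le> 4" using fbp[OF x] by linarith
      then have "\<bar>f phi x - m x\<bar> * \<bar>f phi x + m x - 2 * f theta x\<bar> \<le> \<bar>f phi x - m x\<bar> * 4"
        by (intro mult_left_mono) auto
      then show "\<bar>(f phi x - m x) * (f phi x + m x - 2 * f theta x)\<bar> \<le> 4 * \<bar>f phi x - m x\<bar>"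
        by (simp add: abs_mult mult.commute)
    qed
    also have "\<dots> = 4 * (\<integral>x. \<bar>f phi x - m x\<bar> \<partial>D)" by simp
    finally have "\<bar>g phi - c\<bar> \<le> 2 * (\<integral>x. \<bar>f phi x - m x\<bar> \<partial>D)" unfolding gc by (simp add: abs_mult)
    then have "\<bar>g phi - c\<bar>^2 \<le> (2 * (\<integral>x. \<bar>f phi x - m x\<bar> \<partial>D))^2"
      by (intro power_mono) auto
    also have "\<dots> = 4 * (\<integral>x. \<bar>f phi x - m x\<bar> \<partial>D)^2" by (simp add: power_mult_distrib)
    also have "\<dots> \<le> 4 * (\<integral>x. \<bar>f phi x - m x\<bar>^2 \<partial>D)"
      using jensen_sq[OF pD, of "\<lambda>x. \<bar>f phi x - m x\<bar>" 2] hb by simp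
    also have "\<dots> = 4 * ip phi" unfolding ip_def by simp
    finally show ?thesis by simp
  qed
  have stepC: "(\<integral>phi. (g phi - c)^2 \<partial>mu) \<le> 4 * W"
  proof -
    have "(\<integral>phi. (g phi - c)^2 \<partial>mu) \<le> (\<integral>phi. 4 * ip phi \<partial>mu)"
    proof (rule integral_mono)
      show "integrable mu (\<lambda>phi. (g phi - c)^2)"
        by (rule pb_int[OF pmu, where B=16]) (use gb cb sq_bound2 in auto)
      show "integrable mu (\<lambda>phi. 4 * ip phi)"
        by (rule pb_int[OF pmu, where B=16]) (use ipb in \<open>auto simp: abs_mult\<close>)
    qed (rule stepB)
    then show ?thesis unfolding W_def by simp
  qed
  have WV: "W = A - B0"
  proof -
    define a where "a phi = (\<integral>x. f phi x * f phi x \<partial>D)" for phi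
    define b where "b phi = (\<integral>x. f phi x * m x \<partial>D)" for phi
    have am[measurable]: "a \<in> borel_measurable mu" unfolding a_def[abs_def] by measurable
    have bm[measurable]: "b \<in> borel_measurable mu" unfolding b_def[abs_def] by measurable
    have iD: "integrable D (\<lambda>x. f phi x * f phi x)" "integrable D (\<lambda>x. f phi x * m x)"
      "integrable D (\<lambda>x. m x * m x)" if phi: "phi \<in> space mu" for phi
    proof -
      note [measurable] = fphi[OF phi]
      show "integrable D (\<lambda>x. f phi x * f phi x)"
        by (rule pb_int[OF pD, where B=1]) (auto intro!: prod_bound fb phi sq_le1)
      show "integrable D (\<lambda>x. f phi x * m x)"
        by (rule pb_int[OF pD, where B=1]) (auto intro!: prod_bound fb phi mb)
      show "integrable D (\<lambda>x. m x * m x)"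
        by (rule pb_int[OF pD, where B=1]) (auto intro!: prod_bound mb sq_le1)
    qed
    have ab: "\<bar>a phi\<bar> \<le> 1" "\<bar>b phi\<bar> \<le> 1" if phi: "phi \<in> space mu" for phi
    proof -
      note [measurable] = fphi[OF phi]
      show "\<bar>a phi\<bar> \<le> 1" unfolding a_def
        by (rule pb_bound[OF pD]) (auto intro!: prod_bound fb phi sq_le1)
      show "\<bar>b phi\<bar> \<le> 1" unfolding b_def
        by (rule pb_bound[OF pD]) (auto intro!: prod_bound fb phi mb)
    qed
    have ia: "integrable mu a" by (rule pb_int[OF pmu am ab(1)])
    have ib: "integrable mu b" by (rule pb_int[OF pmu bm ab(2)])
    have e: "ip phi = a phi - 2 * b phi + B0" if phi: "phi \<in> space mu" for phi
    proof -
      have "ip phi = (\<integral>x. (f phi x * f phi x - 2 * (f phi x * m x)) + m x * m x \<partial>D)"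
        unfolding ip_def by (rule Bochner_Integration.integral_cong) (auto simp: power2_eq_square algebra_simps)
      also have "\<dots> = a phi - 2 * b phi + B0"
        using iD[OF phi] unfolding a_def b_def B0_def inner_L2_def by simp
      finally show ?thesis .
    qed
    have "W = (\<integral>phi. a phi - 2 * b phi + B0 \<partial>mu)"
      unfolding W_def by (rule Bochner_Integration.integral_cong) (auto simp: e)
    also have "\<dots> = (\<integral>phi. a phi \<partial>mu) - 2 * (\<integral>phi. b phi \<partial>mu) + B0"
      using ia ib by (simp add: M1.prob_space)
    also have "(\<integral>phi. a phi \<partial>mu) = A" unfolding A_def a_def inner_L2_def ..
    also have "(\<integral>phi. b phi \<partial>mu) = B0"
    proof -
      have int: "integrable (mu \<Otimes>\<^sub>M D) (\<lambda>(phi, x). f phi x * m x)"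
      proof (rule pb_int[OF pP, where B=1])
        fix z assume "z \<in> space (mu \<Otimes>\<^sub>M D)"
        then obtain phi x where z: "z = (phi, x)" "phi \<in> space mu" "x \<in> space D"
          by (auto simp: space_pair_measure)
        show "\<bar>(case z of (phi, x) \<Rightarrow> f phi x * m x)\<bar> \<le> 1" using z
          by (auto intro!: prod_bound fb mb)
      qed measurable
      have "(\<integral>phi. b phi \<partial>mu) = (\<integral>x. (\<integral>phi. f phi x * m x \<partial>mu) \<partial>D)"
        unfolding b_def using Fubini_integral[OF int] by simp
      also have "\<dots> = (\<integral>x. m x * m x \<partial>D)"
        by (rule Bochner_Integration.integral_cong) (auto simp: m_eq)
      finally show ?thesis unfolding B0_def inner_L2_def .
    qed
    finally show ?thesis by simp
  qed
  have AE: "A = (\<integral>z. (case z of (phi, x) \<Rightarrow> (f phi x)^2) \<partial>(mu \<Otimes>\<^sub>M D))"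
  proof -
    have int: "integrable (mu \<Otimes>\<^sub>M D) (\<lambda>(phi, x). (f phi x)^2)"
    proof (rule pb_int[OF pP, where B=1])
      fix z assume "z \<in> space (mu \<Otimes>\<^sub>M D)"
      then obtain phi x where z: "z = (phi, x)" "phi \<in> space mu" "x \<in> space D"
        by (auto simp: space_pair_measure)
      have "\<bar>f phi x\<bar>^2 \<le> 1^2" using fb[OF z(2,3)] by (intro power_mono) auto
      then show "\<bar>(case z of (phi, x) \<Rightarrow> (f phi x)^2)\<bar> \<le> 1" using z by simp
    qed measurable
    have "A = (\<integral>phi. (\<integral>x. (f phi x)^2 \<partial>D) \<partial>mu)"
      unfolding A_def inner_L2_def by (simp add: power2_eq_square)
    also have "\<dots> = (\<integral>z. (case z of (phi, x) \<Rightarrow> (f phi x)^2) \<partial>(mu \<Otimes>\<^sub>M D))"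
      by (rule integral_fst[OF int])
    finally show ?thesis .
  qed
  have A1: "A \<le> 1"
  proof -
    have "\<bar>A\<bar> \<le> 1" unfolding A_def
    proof (rule pb_bound[OF pmu])
      show "(\<lambda>phi. inner_L2 D (f phi) (f phi)) \<in> borel_measurable mu"
        unfolding inner_L2_def by measurable
      fix phi assume phi: "phi \<in> space mu"
      show "\<bar>inner_L2 D (f phi) (f phi)\<bar> \<le> 1" unfolding inner_L2_def
      proof (rule pb_bound[OF pD])
        show "(\<lambda>x. f phi x * f phi x) \<in> borel_measurable D" using fphi[OF phi] by measurable
        fix x assume "x \<in> space D"
        then show "\<bar>f phi x * f phi x\<bar> \<le> 1" by (intro prod_bound fb phi)
      qed
    qed
    then show ?thesis by simp
  qed
  have B0: "0 \<le> B0" unfolding B0_def inner_L2_def by simp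
  have W0: "0 \<le> W" unfolding W_def ip_def by (auto intro!: Bochner_Integration.integral_nonneg)
  have V: "var_class mu D f = A - B0" unfolding var_class_def A_def B0_def m_def ..
  have "A - B0 \<le> sqrt (A - B0)"
  proof -
    have s1: "sqrt (A - B0) \<le> 1" using real_sqrt_le_mono[of "A - B0" 1] A1 B0 by simp
    have "A - B0 = sqrt (A - B0) * sqrt (A - B0)" using W0 WV by simp
    also have "\<dots> \<le> sqrt (A - B0) * 1" using s1 W0 WV by (intro mult_left_mono) auto
    finally show ?thesis by simp
  qed
  then have part1: "var_of mu g \<le> 4 * sqrt (var_class mu D f)"
    unfolding V using stepA stepC WV by linarith
  have part2: "sqrt (var_class mu D f) \<le> sqrt A" using V B0 by simp
  show ?thesis using part1 part2 AE unfolding g_def by simp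

qed

end
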